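(* Let $\mathcal{D}=\mathcal{P}_{\mathcal{D}}\cup\mathcal{L}_{\mathcal{D}}$ be a non-primal dominating set of the incidence graph of $\mathrm{PG}(2,q)$, $q=p^h$, $p$ prime. If $|\mathcal{D}|+|\mathcal{P}_{\mathcal{D}}|\leq 4q-3$, then $\mathcal{P}_{\mathcal{D}}$ is a blocking set. Dually, if $|\mathcal{D}|+|\mathcal{L}_{\mathcal{D}}|\leq 4q-3$, then $\mathcal{L}_{\mathcal{D}}$ is a covering set.
   Context: $\mathrm{PG}(2,q)$ is the Desarguesian projective plane of order $q$. A dominating set $\mathcal{D}=\mathcal{P}_{\mathcal{D}}\cup\mathcal{L}_{\mathcal{D}}$ of its incidence graph is a set of points and lines such that every point not in $\mathcal{P}_{\mathcal{D}}$ lies on a line of $\mathcal{L}_{\mathcal{D}}$ and every line not in $\mathcal{L}_{\mathcal{D}}$ contains a point of $\mathcal{P}_{\mathcal{D}}$. $\mathcal{D}$ is primal if it contains $q$ concurrent lines or $q$ collinear points. A blocking set is a point set meeting every line; a covering set is a line set whose union contains all points. *)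

theory Defs
  imports Main
begin

text \<open>The Desarguesian plane PG(2,q) over a finite field of type 'a (q = CARD('a),
 automatically a prime power).\<close>

type_synonym 'a vec3 = "'a \<times> 'a \<times> 'a"

definition smult3 :: "'a::field \<Rightarrow> 'a vec3 \<Rightarrow> 'a vec3" where
  "smult3 c v = (case v of (x,y,z) \<Rightarrow> (c*x, c*y, c*z))"

definition dot3 :: "'a::field vec3 \<Rightarrow> 'a vec3 \<Rightarrow> 'a" where
  "dot3 v w = (case v of (x,y,z) \<Rightarrow> case w of (a,b,c) \<Rightarrow> x*a + y*b + z*c)"

definition proj_class :: "'a::field vec3 \<Rightarrow> 'a vec3 set" where
  "proj_class v = {smult3 c v | c. c \<noteq> 0}"

definition pg_points :: "'a::field vec3 set set" where
  "pg_points = {proj_class v | v. v \<noteq> (0,0,0)}"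

text \<open>Lines are given by their dual coordinates.\<close>
definition pg_lines :: "'a::field vec3 set set" where
  "pg_lines = {proj_class w | w. w \<noteq> (0,0,0)}"

definition incident :: "'a::field vec3 set \<Rightarrow> 'a vec3 set \<Rightarrow> bool" where
  "incident P L \<longleftrightarrow> (\<exists>v\<in>P. \<exists>w\<in>L. dot3 v w = 0)"

definition dominating :: "'a::field vec3 set set \<Rightarrow> 'a vec3 set set \<Rightarrow> bool" where
  "dominating PD LD \<longleftrightarrow> PD \<subseteq> pg_points \<and> LD \<subseteq> pg_lines \<and>
     (\<forall>P\<in>pg_points - PD. \<exists>L\<in>LD. incident P L) \<and>
     (\<forall>L\<in>pg_lines - LD. \<exists>P\<in>PD. incident P L)"

definition primal :: "nat \<Rightarrow> 'a::field vec3 set set \<Rightarrow> 'a vec3 set set \<Rightarrow> bool" where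
  "primal q PD LD \<longleftrightarrow>
     (\<exists>S\<subseteq>LD. card S = q \<and> (\<exists>P\<in>pg_points. \<forall>L\<in>S. incident P L)) \<or>
     (\<exists>S\<subseteq>PD. card S = q \<and> (\<exists>L\<in>pg_lines. \<forall>P\<in>S. incident P L))"

definition blocking_set :: "'a::field vec3 set set \<Rightarrow> bool" where
  "blocking_set B \<longleftrightarrow> B \<subseteq> pg_points \<and> (\<forall>L\<in>pg_lines. \<exists>P\<in>B. incident P L)"

definition covering_set :: "'a::field vec3 set set \<Rightarrow> bool" where
  "covering_set C \<longleftrightarrow> C \<subseteq> pg_lines \<and> (\<forall>P\<in>pg_points. \<exists>L\<in>C. incident P L)"

end

theory Submission
  imports Defs "HOL-Computational_Algebra.Polynomial"
begin

lemma card_char0: "of_nat (card (UNIV::'a set)) = (0::'a::{field,finite})"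
proof -
  have inj: "inj (\<lambda>x::'a. x + 1)" by (auto intro: injI)
  have surj: "range (\<lambda>x::'a. x + 1) = UNIV"
    by (auto intro!: image_eqI[where x="_ - 1"])
  have "(\<Sum>x\<in>UNIV. x) = (\<Sum>x\<in>range (\<lambda>x::'a. x + 1). x)" by (simp add: surj)
  also have "\<dots> = (\<Sum>x\<in>UNIV. x + 1)" by (subst sum.reindex[OF inj]) simp
  also have "\<dots> = (\<Sum>x\<in>UNIV. x) + of_nat (card (UNIV::'a set))" by (simp add: sum.distrib)
  finally show ?thesis by simp
qed

lemma card_ge2: "2 \<le> card (UNIV::'a::{field,finite} set)"
proof -
  have "card {0::'a, 1} \<le> card (UNIV::'a set)" by (rule card_mono) auto
  thus ?thesis by simp
qed

lemma roots_unity_bound: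
  assumes "j > 0"
  shows "card {x::'a::{field,finite}. x ^ j = 1} \<le> j"
proof -
  let ?p = "monom (1::'a) j - 1"
  have "?p = monom 1 j + (- 1)" by simp
  also have "degree \<dots> = j" using assms by (subst degree_add_eq_left) (simp_all add: degree_monom_eq)
  finally have d: "degree ?p = j" .
  have "?p \<noteq> 0" using d assms by auto
  hence "card {x. poly ?p x = 0} \<le> degree ?p" by (rule card_poly_roots_bound)
  moreover have "{x. poly ?p x = 0} = {x. x ^ j = 1}" by (auto simp: poly_monom)
  ultimately show ?thesis using d by simp
qed

lemma power_sum_zero:
  assumes "j < card (UNIV::'a::{field,finite} set) - 1"
  shows "(\<Sum>x::'a::{field,finite}\<in>UNIV. x ^ j) = 0"
proof (cases "j = 0")
  case True thus ?thesis using card_char0 by simp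
next
  case False
  have "card {x::'a. x ^ j = 1} \<le> j" using False roots_unity_bound by auto
  moreover have "card (UNIV - {0::'a}) = card (UNIV::'a set) - 1" by (simp add: card_Diff_singleton)
  ultimately have "\<not> (UNIV - {0::'a}) \<subseteq> {x. x ^ j = 1}"
    using assms card_mono[of "{x::'a. x ^ j = 1}" "UNIV - {0}"] by fastforce
  then obtain c :: 'a where c: "c \<noteq> 0" "c ^ j \<noteq> 1" by auto
  have inj: "inj (\<lambda>x::'a. c * x)" using c by (auto intro: injI)
  have surj: "range (\<lambda>x::'a. c * x) = UNIV"
    using c by (auto intro!: image_eqI[where x="_ / c"])
  have "(\<Sum>x\<in>UNIV. x ^ j) = (\<Sum>x\<in>range (\<lambda>x::'a. c * x). x ^ j)" by (simp add: surj)
  also have "\<dots> = (\<Sum>x\<in>UNIV. (c * x) ^ j)" by (subst sum.reindex[OF inj]) simp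
  also have "\<dots> = c ^ j * (\<Sum>x\<in>UNIV. x ^ j)" by (simp add: power_mult_distrib sum_distrib_left)
  finally have "(c ^ j - 1) * (\<Sum>x\<in>UNIV. x ^ j) = 0" by (simp add: algebra_simps)
  thus ?thesis using c by simp
qed

lemma poly2_sum_zero:
  fixes c a b :: "'i \<Rightarrow> 'a::{field,finite}"
  assumes fin: "finite I" and cI: "card I < 2 * (card (UNIV::'a set) - 1)"
  shows "(\<Sum>\<alpha>\<in>UNIV. \<Sum>\<beta>\<in>UNIV. \<Prod>i\<in>I. c i + \<alpha> * a i + \<beta> * b i) = 0"
proof -
  define K where "K X Y = (\<Prod>i\<in>Y. a i) * (\<Prod>i\<in>X-Y. b i) * (\<Prod>i\<in>I-X. c i)" for X Y
  have expand: "(\<Prod>i\<in>I. c i + \<alpha> * a i + \<beta> * b i) =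
     (\<Sum>X\<in>Pow I. \<Sum>Y\<in>Pow X. \<alpha> ^ card Y * \<beta> ^ card (X - Y) * K X Y)" for \<alpha> \<beta>
  proof -
    have "(\<Prod>i\<in>I. c i + \<alpha> * a i + \<beta> * b i) = (\<Prod>i\<in>I. (\<alpha> * a i + \<beta> * b i) + c i)"
      by (simp add: algebra_simps)
    also have "\<dots> = (\<Sum>X\<in>Pow I. (\<Prod>i\<in>X. \<alpha> * a i + \<beta> * b i) * (\<Prod>i\<in>I-X. c i))"
      by (rule prod_add[OF fin])
    also have "\<dots> = (\<Sum>X\<in>Pow I. \<Sum>Y\<in>Pow X. \<alpha> ^ card Y * \<beta> ^ card (X - Y) * K X Y)"
    proof (rule sum.cong[OF refl])
      fix X assume X: "X \<in> Pow I"
      hence finX: "finite X" using fin finite_subset by auto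
      have "(\<Prod>i\<in>X. \<alpha> * a i + \<beta> * b i) = (\<Sum>Y\<in>Pow X. (\<Prod>i\<in>Y. \<alpha> * a i) * (\<Prod>i\<in>X-Y. \<beta> * b i))"
        by (rule prod_add[OF finX])
      also have "\<dots> = (\<Sum>Y\<in>Pow X. \<alpha> ^ card Y * \<beta> ^ card (X - Y) * ((\<Prod>i\<in>Y. a i) * (\<Prod>i\<in>X-Y. b i)))"
        by (rule sum.cong[OF refl]) (simp add: prod.distrib algebra_simps)
      finally show "(\<Prod>i\<in>X. \<alpha> * a i + \<beta> * b i) * (\<Prod>i\<in>I-X. c i) =
          (\<Sum>Y\<in>Pow X. \<alpha> ^ card Y * \<beta> ^ card (X - Y) * K X Y)"
        by (simp only: sum_distrib_right K_def) (simp add: algebra_simps)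
    qed
    finally show ?thesis .
  qed
  have zero: "(\<Sum>\<alpha>\<in>UNIV. \<Sum>\<beta>\<in>UNIV. \<alpha> ^ card Y * \<beta> ^ card (X - Y) * K X Y) = 0"
    if X: "X \<in> Pow I" and Y: "Y \<in> Pow X" for X Y
  proof -
    have finX: "finite X" using X fin finite_subset by auto
    have "card X \<le> card I" using X fin by (auto intro: card_mono)
    moreover have "card Y + card (X - Y) = card X"
      using Y finX by (metis PowD card_Diff_subset card_mono finite_subset le_add_diff_inverse)
    ultimately have "card Y < card (UNIV::'a set) - 1 \<or> card (X - Y) < card (UNIV::'a set) - 1"
      using cI by linarith
    moreover have "(\<Sum>\<alpha>\<in>UNIV. \<Sum>\<beta>\<in>UNIV. \<alpha> ^ card Y * \<beta> ^ card (X - Y) * K X Y) =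
        (\<Sum>\<alpha>\<in>UNIV. \<alpha> ^ card Y) * (\<Sum>\<beta>\<in>UNIV. \<beta> ^ card (X - Y)) * K X Y"
      unfolding sum_product by (simp only: sum_distrib_right)
    ultimately show ?thesis using power_sum_zero by auto
  qed
  have "(\<Sum>\<alpha>\<in>UNIV. \<Sum>\<beta>\<in>UNIV. \<Prod>i\<in>I. c i + \<alpha> * a i + \<beta> * b i) =
     (\<Sum>\<alpha>\<in>UNIV. \<Sum>\<beta>\<in>UNIV. \<Sum>X\<in>Pow I. \<Sum>Y\<in>Pow X. \<alpha> ^ card Y * \<beta> ^ card (X - Y) * K X Y)"
    by (simp add: expand)
  also have "\<dots> = (\<Sum>X\<in>Pow I. \<Sum>Y\<in>Pow X. \<Sum>\<alpha>\<in>UNIV. \<Sum>\<beta>\<in>UNIV. \<alpha> ^ card Y * \<beta> ^ card (X - Y) * K X Y)"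
  proof -
    have "(\<Sum>\<alpha>\<in>UNIV. \<Sum>\<beta>\<in>UNIV. \<Sum>X\<in>Pow I. \<Sum>Y\<in>Pow X. \<alpha> ^ card Y * \<beta> ^ card (X - Y) * K X Y)
       = (\<Sum>\<alpha>\<in>UNIV. \<Sum>X\<in>Pow I. \<Sum>\<beta>\<in>UNIV. \<Sum>Y\<in>Pow X. \<alpha> ^ card Y * \<beta> ^ card (X - Y) * K X Y)"
      by (rule sum.cong[OF refl], rule sum.swap)
    also have "\<dots> = (\<Sum>X\<in>Pow I. \<Sum>\<alpha>\<in>UNIV. \<Sum>\<beta>\<in>UNIV. \<Sum>Y\<in>Pow X. \<alpha> ^ card Y * \<beta> ^ card (X - Y) * K X Y)"
      by (rule sum.swap)
    also have "\<dots> = (\<Sum>X\<in>Pow I. \<Sum>\<alpha>\<in>UNIV. \<Sum>Y\<in>Pow X. \<Sum>\<beta>\<in>UNIV. \<alpha> ^ card Y * \<beta> ^ card (X - Y) * K X Y)"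
      by (rule sum.cong[OF refl], rule sum.cong[OF refl], rule sum.swap)
    also have "\<dots> = (\<Sum>X\<in>Pow I. \<Sum>Y\<in>Pow X. \<Sum>\<alpha>\<in>UNIV. \<Sum>\<beta>\<in>UNIV. \<alpha> ^ card Y * \<beta> ^ card (X - Y) * K X Y)"
      by (rule sum.cong[OF refl], rule sum.swap)
    finally show ?thesis .
  qed
  also have "\<dots> = 0" by (rule sum.neutral, rule ballI, rule sum.neutral) (use zero in blast)
  finally show ?thesis .
qed

definition cross3 :: "'a::field vec3 \<Rightarrow> 'a vec3 \<Rightarrow> 'a vec3" where
  "cross3 v w = (case v of (x1,y1,z1) \<Rightarrow> case w of (x2,y2,z2) \<Rightarrow>
     (y1*z2 - z1*y2, z1*x2 - x1*z2, x1*y2 - y1*x2))"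

definition lc3 :: "'a::field \<Rightarrow> 'a vec3 \<Rightarrow> 'a \<Rightarrow> 'a vec3 \<Rightarrow> 'a vec3" where
  "lc3 \<alpha> u \<beta> v = (case u of (u1,u2,u3) \<Rightarrow> case v of (v1,v2,v3) \<Rightarrow>
     (\<alpha>*u1+\<beta>*v1, \<alpha>*u2+\<beta>*v2, \<alpha>*u3+\<beta>*v3))"

lemma dot3_smult_left: "dot3 (smult3 c v) w = c * dot3 v w"
  by (cases v; cases w) (simp add: dot3_def smult3_def algebra_simps)

lemma dot3_smult_right: "dot3 v (smult3 c w) = c * dot3 v w"
  by (cases v; cases w) (simp add: dot3_def smult3_def algebra_simps)

lemma dot3_comm: "dot3 v w = dot3 w v"
  by (cases v; cases w) (simp add: dot3_def algebra_simps)

lemma dot3_lc3: "dot3 v (lc3 \<alpha> a \<beta> b) = \<alpha> * dot3 v a + \<beta> * dot3 v b"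
  by (cases v; cases a; cases b) (simp add: dot3_def lc3_def algebra_simps)

lemma smult3_eq_0: "smult3 c v = (0,0,0) \<longleftrightarrow> c = 0 \<or> v = (0,0,0)"
  by (cases v) (auto simp: smult3_def)

lemma smult3_smult3: "smult3 c (smult3 d v) = smult3 (c*d) v"
  by (cases v) (simp add: smult3_def)

lemma smult3_one: "smult3 1 v = v"
  by (cases v) (simp add: smult3_def)

lemma proj_class_mem: "v \<in> proj_class v"
  unfolding proj_class_def using smult3_one[of v] by (metis (mono_tags, lifting) mem_Collect_eq one_neq_zero)

lemma proj_class_nz: "u \<in> proj_class v \<Longrightarrow> v \<noteq> (0,0,0) \<Longrightarrow> u \<noteq> (0,0,0)"
  unfolding proj_class_def by (auto simp: smult3_eq_0)

lemma proj_class_smult: "c \<noteq> 0 \<Longrightarrow> proj_class (smult3 c v) = proj_class v"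
  unfolding proj_class_def
proof (auto simp: smult3_smult3)
  fix d :: 'a assume "c \<noteq> 0" "d \<noteq> 0"
  thus "\<exists>e. smult3 d v = smult3 (e * c) v \<and> e \<noteq> 0"
    by (intro exI[of _ "d / c"]) auto
qed

lemma proj_class_eq_iff:
  assumes "v \<noteq> (0,0,0)"
  shows "proj_class v = proj_class v' \<longleftrightarrow> (\<exists>d. d \<noteq> 0 \<and> v' = smult3 d v)"
proof
  assume "proj_class v = proj_class v'"
  hence "v' \<in> proj_class v" using proj_class_mem by metis
  thus "\<exists>d. d \<noteq> 0 \<and> v' = smult3 d v" unfolding proj_class_def by auto
next
  assume "\<exists>d. d \<noteq> 0 \<and> v' = smult3 d v"
  thus "proj_class v = proj_class v'" using proj_class_smult by metis
qed

lemma incident_iff: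
  assumes "v \<noteq> (0,0,0)" "w \<noteq> (0,0,0)"
  shows "incident (proj_class v) (proj_class w) \<longleftrightarrow> dot3 v w = 0"
  unfolding incident_def
proof
  assume "\<exists>x\<in>proj_class v. \<exists>y\<in>proj_class w. dot3 x y = 0"
  then obtain c d where "c \<noteq> 0" "d \<noteq> 0" "dot3 (smult3 c v) (smult3 d w) = 0"
    unfolding proj_class_def by auto
  thus "dot3 v w = 0" by (simp add: dot3_smult_left dot3_smult_right)
next
  assume "dot3 v w = 0"
  thus "\<exists>x\<in>proj_class v. \<exists>y\<in>proj_class w. dot3 x y = 0" using proj_class_mem by blast
qed

lemma incident_sym: "incident P L = incident L P"
  unfolding incident_def by (metis dot3_comm)

lemma pg_lines_eq: "pg_lines = pg_points"
  unfolding pg_lines_def pg_points_def by (rule refl)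

lemma pg_pointsE:
  assumes "P \<in> pg_points"
  obtains v where "v \<noteq> (0,0,0)" "P = proj_class v"
  using assms that unfolding pg_points_def by blast

lemma pg_pointsI: "v \<noteq> (0,0,0) \<Longrightarrow> proj_class v \<in> pg_points"
  unfolding pg_points_def by blast

lemma cross_zero:
  assumes "cross3 v w = (0,0,0)" "v \<noteq> (0,0,0)"
  shows "\<exists>d. w = smult3 d v"
proof -
  obtain x1 y1 z1 where v: "v = (x1,y1,z1)" by (cases v) auto
  obtain x2 y2 z2 where w: "w = (x2,y2,z2)" by (cases w) auto
  have e: "y1*z2 = z1*y2" "z1*x2 = x1*z2" "x1*y2 = y1*x2"
    using assms(1) by (auto simp: cross3_def v w)
  consider "x1 \<noteq> 0" | "y1 \<noteq> 0" | "z1 \<noteq> 0" using assms(2) v by auto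
  thus ?thesis
  proof cases
    case 1
    show ?thesis
      by (rule exI[of _ "x2/x1"]) (use 1 e in \<open>auto simp: v w smult3_def field_simps\<close>)
  next
    case 2
    show ?thesis
      by (rule exI[of _ "y2/y1"]) (use 2 e in \<open>auto simp: v w smult3_def field_simps\<close>)
  next
    case 3
    show ?thesis
      by (rule exI[of _ "z2/z1"]) (use 3 e in \<open>auto simp: v w smult3_def field_simps\<close>)
  qed
qed

lemma dot_cross1: "dot3 v (cross3 v w) = 0"
  by (cases v; cases w) (simp add: dot3_def cross3_def algebra_simps)

lemma dot_cross2: "dot3 w (cross3 v w) = 0"
  by (cases v; cases w) (simp add: dot3_def cross3_def algebra_simps)

lemma cross_cross:
  assumes "dot3 w v = 0" "dot3 w v' = 0"
  shows "cross3 (cross3 v v') w = (0,0,0)"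
proof -
  obtain x1 y1 z1 where v: "v = (x1,y1,z1)" by (cases v) auto
  obtain x2 y2 z2 where v': "v' = (x2,y2,z2)" by (cases v') auto
  obtain a b c where w: "w = (a,b,c)" by (cases w) auto
  have e1: "a*x1 + b*y1 + c*z1 = 0" and e2: "a*x2 + b*y2 + c*z2 = 0"
    using assms by (auto simp: dot3_def v v' w)
  have "(z1*x2 - x1*z2) * c - (x1*y2 - y1*x2) * b = x2 * (a*x1 + b*y1 + c*z1) - x1 * (a*x2 + b*y2 + c*z2)"
    by (simp add: algebra_simps)
  moreover have "(x1*y2 - y1*x2) * a - (y1*z2 - z1*y2) * c = y2 * (a*x1 + b*y1 + c*z1) - y1 * (a*x2 + b*y2 + c*z2)"
    by (simp add: algebra_simps)
  moreover have "(y1*z2 - z1*y2) * b - (z1*x2 - x1*z2) * a = z2 * (a*x1 + b*y1 + c*z1) - z1 * (a*x2 + b*y2 + c*z2)"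
    by (simp add: algebra_simps)
  ultimately show ?thesis using e1 e2 by (simp add: cross3_def v v' w)
qed

lemma cross_nz:
  assumes "v \<noteq> (0,0,0)" "w \<noteq> (0,0,0)" "proj_class v \<noteq> proj_class w"
  shows "cross3 v w \<noteq> (0,0,0)"
proof
  assume "cross3 v w = (0,0,0)"
  then obtain d where d: "w = smult3 d v" using cross_zero assms(1) by blast
  hence "d \<noteq> 0" using assms(2) by (auto simp: smult3_eq_0)
  thus False using assms(3) d proj_class_smult by metis
qed

lemma line_exists:
  assumes "P \<in> pg_points" "P' \<in> pg_points" "P \<noteq> P'"
  shows "\<exists>L\<in>pg_points. incident P L \<and> incident P' L"
proof -
  obtain v where v: "v \<noteq> (0,0,0)" "P = proj_class v" using assms(1) by (rule pg_pointsE)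
  obtain v' where v': "v' \<noteq> (0,0,0)" "P' = proj_class v'" using assms(2) by (rule pg_pointsE)
  have n: "cross3 v v' \<noteq> (0,0,0)" using cross_nz v v' assms(3) by blast
  show ?thesis
    by (rule bexI[of _ "proj_class (cross3 v v')"])
       (use n v v' in \<open>auto simp: incident_iff dot_cross1 dot_cross2 intro: pg_pointsI\<close>)
qed

lemma line_unique:
  assumes "P \<in> pg_points" "P' \<in> pg_points" "P \<noteq> P'" "L \<in> pg_points" "L' \<in> pg_points"
    "incident P L" "incident P' L" "incident P L'" "incident P' L'"
  shows "L = L'"
proof -
  obtain v where v: "v \<noteq> (0,0,0)" "P = proj_class v" using assms(1) by (rule pg_pointsE)
  obtain v' where v': "v' \<noteq> (0,0,0)" "P' = proj_class v'" using assms(2) by (rule pg_pointsE)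
  obtain w where w: "w \<noteq> (0,0,0)" "L = proj_class w" using assms(4) by (rule pg_pointsE)
  obtain w' where w': "w' \<noteq> (0,0,0)" "L' = proj_class w'" using assms(5) by (rule pg_pointsE)
  have n: "cross3 v v' \<noteq> (0,0,0)" using cross_nz v v' assms(3) by blast
  have "dot3 v w = 0" "dot3 v' w = 0" "dot3 v w' = 0" "dot3 v' w' = 0"
    using assms(6-9) v v' w w' incident_iff by metis+
  hence "cross3 (cross3 v v') w = (0,0,0)" "cross3 (cross3 v v') w' = (0,0,0)"
    using cross_cross dot3_comm by metis+
  then obtain d d' where d: "w = smult3 d (cross3 v v')" and d': "w' = smult3 d' (cross3 v v')"
    using cross_zero n by blast
  have "d \<noteq> 0" "d' \<noteq> 0" using d d' w w' by (auto simp: smult3_eq_0)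
  thus ?thesis using d d' w w' proj_class_smult by metis
qed

lemma indep_basis:
  assumes "w \<noteq> (0,0,0)"
  shows "\<exists>a b. dot3 w a = 0 \<and> dot3 w b = 0 \<and> (\<forall>\<alpha> \<beta>. lc3 \<alpha> a \<beta> b = (0,0,0) \<longrightarrow> \<alpha> = 0 \<and> \<beta> = 0)"
proof -
  obtain w1 w2 w3 where w: "w = (w1,w2,w3)" by (cases w) auto
  consider "w1 \<noteq> 0" | "w2 \<noteq> 0" | "w3 \<noteq> 0" using assms w by auto
  thus ?thesis
  proof cases
    case 1
    show ?thesis
      by (rule exI[of _ "(-w2, w1, 0)"], rule exI[of _ "(-w3, 0, w1)"])
         (use 1 in \<open>auto simp: w dot3_def lc3_def algebra_simps\<close>)
  next
    case 2
    show ?thesis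
      by (rule exI[of _ "(w2, -w1, 0)"], rule exI[of _ "(0, -w3, w2)"])
         (use 2 in \<open>auto simp: w dot3_def lc3_def algebra_simps\<close>)
  next
    case 3
    show ?thesis
      by (rule exI[of _ "(w3, 0, -w1)"], rule exI[of _ "(0, w3, -w2)"])
         (use 3 in \<open>auto simp: w dot3_def lc3_def algebra_simps\<close>)
  qed
qed

lemma fin_sets: "finite (X :: 'a::finite vec3 set set)"
  by simp

lemma lc3_eq_indep:
  assumes "\<forall>\<alpha> \<beta>. lc3 \<alpha> a \<beta> b = (0,0,0) \<longrightarrow> \<alpha> = 0 \<and> \<beta> = 0"
    and "lc3 \<alpha> a \<beta> b = lc3 \<alpha>' a \<beta>' b"
  shows "\<alpha> = \<alpha>' \<and> \<beta> = \<beta>'"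
proof -
  have "lc3 (\<alpha> - \<alpha>') a (\<beta> - \<beta>') b = (0,0,0)"
    using assms(2) by (cases a; cases b) (auto simp: lc3_def algebra_simps)
  hence "\<alpha> - \<alpha>' = 0 \<and> \<beta> - \<beta>' = 0" using assms(1) by blast
  thus ?thesis by simp
qed

lemma smult3_lc3: "smult3 d (lc3 \<alpha> a \<beta> b) = lc3 (d*\<alpha>) a (d*\<beta>) b"
  by (cases a; cases b) (simp add: smult3_def lc3_def algebra_simps)

lemma lc3_0b: "lc3 0 a 1 b = b"
  by (cases a; cases b) (simp add: lc3_def)

lemma smult3_as_lc3: "smult3 d b = lc3 0 a d b"
  by (cases a; cases b) (simp add: smult3_def lc3_def)

lemma card_line:
  assumes "L \<in> pg_points"
  shows "card (UNIV::'a::{field,finite} set) + 1 \<le> card {P\<in>pg_points. incident P (L::'a vec3 set)}"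
proof -
  obtain w where w: "w \<noteq> (0,0,0)" "L = proj_class w" using assms by (rule pg_pointsE)
  obtain a b where ab: "dot3 w a = 0" "dot3 w b = 0"
    and ind: "\<forall>\<alpha> \<beta>. lc3 \<alpha> a \<beta> b = (0,0,0) \<longrightarrow> \<alpha> = 0 \<and> \<beta> = 0"
    using indep_basis[OF w(1)] by blast
  define f where "f ox = (case ox of None \<Rightarrow> proj_class b | Some c \<Rightarrow> proj_class (lc3 1 a c b))" for ox :: "'a option"
  have bnz: "b \<noteq> (0,0,0)" using ind lc3_0b[of a b] by force
  have lnz: "lc3 1 a c b \<noteq> (0,0,0)" for c using ind by force
  have inj: "inj f"
  proof (rule injI)
    fix x y assume e: "f x = f y"
    show "x = y"
    proof (cases x; cases y)
      fix c c' assume xy: "x = Some c" "y = Some c'"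
      with e have "proj_class (lc3 1 a c b) = proj_class (lc3 1 a c' b)" by (simp add: f_def)
      then obtain d where "d \<noteq> 0" "lc3 1 a c' b = smult3 d (lc3 1 a c b)"
        using proj_class_eq_iff lnz by blast
      hence "lc3 1 a c' b = lc3 d a (d*c) b" by (simp add: smult3_lc3)
      hence "1 = d \<and> c' = d * c" using lc3_eq_indep[OF ind] by blast
      thus ?thesis using xy by simp
    next
      fix c assume xy: "x = None" "y = Some c"
      with e have "proj_class b = proj_class (lc3 1 a c b)" by (simp add: f_def)
      then obtain d where "lc3 1 a c b = smult3 d b"
        using proj_class_eq_iff bnz by blast
      hence "lc3 1 a c b = lc3 0 a d b" by (simp add: smult3_as_lc3[of d b a])
      hence False using lc3_eq_indep[OF ind] by fastforce
      thus ?thesis ..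
    next
      fix c assume xy: "x = Some c" "y = None"
      with e have "proj_class b = proj_class (lc3 1 a c b)" by (simp add: f_def)
      then obtain d where "lc3 1 a c b = smult3 d b"
        using proj_class_eq_iff bnz by blast
      hence "lc3 1 a c b = lc3 0 a d b" by (simp add: smult3_as_lc3[of d b a])
      hence False using lc3_eq_indep[OF ind] by fastforce
      thus ?thesis ..
    qed simp
  qed
  have sub: "range f \<subseteq> {P\<in>pg_points. incident P L}"
  proof
    fix P assume "P \<in> range f"
    then obtain ox where o: "P = f ox" by auto
    show "P \<in> {P\<in>pg_points. incident P L}"
    proof (cases ox)
      case None
      thus ?thesis using o bnz w ab incident_iff[of b w] dot3_comm[of b w]
        by (auto simp: f_def intro: pg_pointsI)
    next
      case (Some c)
      have "dot3 (lc3 1 a c b) w = 0" using ab by (simp add: dot3_comm[of _ w] dot3_lc3)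
      thus ?thesis using o Some lnz[of c] w incident_iff[of "lc3 1 a c b" w]
        by (auto simp: f_def intro: pg_pointsI)
    qed
  qed
  have "card (range f) = card (UNIV :: 'a option set)" using inj by (simp add: card_image)
  also have "\<dots> = card (UNIV::'a set) + 1" by (simp add: UNIV_option_conv card_image)
  finally show ?thesis using card_mono[OF _ sub] by simp
qed

theorem jamison:
  assumes h: "h \<in> pg_points" and B: "B \<subseteq> pg_points"
    and nh: "\<forall>P\<in>B. \<not> incident P h"
    and bl: "\<forall>L\<in>pg_points. L \<noteq> h \<longrightarrow> (\<exists>P\<in>B. incident P L)"
  shows "2 * card (UNIV::'a::{field,finite} set) - 1 \<le> card (B :: 'a vec3 set set)"
proof -
  let ?q = "card (UNIV::'a set)"
  have q2: "2 \<le> ?q" by (rule card_ge2)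
  obtain w0 where w0: "w0 \<noteq> (0,0,0)" "h = proj_class w0" using h by (rule pg_pointsE)
  have "?q + 1 \<le> card {P\<in>pg_points. incident P h}" by (rule card_line[OF h])
  moreover have "card {P\<in>pg_points. incident P h} \<le> card (pg_points :: 'a vec3 set set)"
    by (rule card_mono) auto
  ultimately have c3: "3 \<le> card (pg_points :: 'a vec3 set set)" using q2 by linarith
  have "\<not> pg_points \<subseteq> {h}"
  proof
    assume "pg_points \<subseteq> {h}"
    hence "card (pg_points :: 'a vec3 set set) \<le> card {h}" by (intro card_mono) auto
    thus False using c3 by simp
  qed
  then obtain L where L: "L \<in> pg_points" "L \<noteq> (h::'a vec3 set)" by blast
  then obtain P0 where P0: "P0 \<in> B" using bl by blast
  obtain v0 where v0: "v0 \<noteq> (0,0,0)" "P0 = proj_class v0" using P0 B by (meson pg_pointsE subsetD)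
  have d0: "dot3 v0 w0 \<noteq> 0" using nh P0 v0 w0 incident_iff by metis
  obtain e1 e2 where e: "dot3 v0 e1 = 0" "dot3 v0 e2 = 0"
    and ind: "\<forall>\<alpha> \<beta>. lc3 \<alpha> e1 \<beta> e2 = (0,0,0) \<longrightarrow> \<alpha> = 0 \<and> \<beta> = 0"
    using indep_basis[OF v0(1)] by blast
  define \<phi> where "\<phi> \<alpha> \<beta> = lc3 1 w0 1 (lc3 \<alpha> e1 \<beta> e2)" for \<alpha> \<beta>
  have dphi: "dot3 v (\<phi> \<alpha> \<beta>) = dot3 v w0 + \<alpha> * dot3 v e1 + \<beta> * dot3 v e2" for v \<alpha> \<beta>
    by (simp add: \<phi>_def dot3_lc3)
  have d0phi: "dot3 v0 (\<phi> \<alpha> \<beta>) = dot3 v0 w0" for \<alpha> \<beta> using dphi e by simp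
  have phinz: "\<phi> \<alpha> \<beta> \<noteq> (0,0,0)" for \<alpha> \<beta>
    using d0phi[of \<alpha> \<beta>] d0 by (auto simp: dot3_def)
  have phih: "proj_class (\<phi> \<alpha> \<beta>) \<noteq> h" if "\<not> (\<alpha> = 0 \<and> \<beta> = 0)" for \<alpha> \<beta>
  proof
    assume "proj_class (\<phi> \<alpha> \<beta>) = h"
    then obtain d where d: "\<phi> \<alpha> \<beta> = smult3 d w0" using w0 proj_class_eq_iff by metis
    hence "dot3 v0 w0 = d * dot3 v0 w0" using d0phi[of \<alpha> \<beta>] by (simp add: dot3_smult_right)
    hence "d = 1" using d0 by simp
    hence "lc3 1 w0 1 (lc3 \<alpha> e1 \<beta> e2) = w0" using d by (simp add: \<phi>_def smult3_one)
    hence "lc3 \<alpha> e1 \<beta> e2 = (0,0,0)"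
      by (cases w0; cases "lc3 \<alpha> e1 \<beta> e2") (simp add: lc3_def)
    thus False using ind that by blast
  qed
  define rep where "rep P = (SOME v. v \<noteq> (0,0,0) \<and> P = proj_class v)" for P :: "'a vec3 set"
  have rep: "rep P \<noteq> (0,0,0) \<and> P = proj_class (rep P)" if "P \<in> pg_points" for P
    unfolding rep_def by (rule someI_ex) (use that in \<open>blast elim: pg_pointsE\<close>)
  define B' where "B' = B - {P0}"
  have finB': "finite B'" by simp
  define F where "F \<alpha> \<beta> = (\<Prod>P\<in>B'. dot3 (rep P) w0 + \<alpha> * dot3 (rep P) e1 + \<beta> * dot3 (rep P) e2)" for \<alpha> \<beta>
  have Fz: "F \<alpha> \<beta> = 0" if nz: "\<not> (\<alpha> = 0 \<and> \<beta> = 0)" for \<alpha> \<beta>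
  proof -
    have "proj_class (\<phi> \<alpha> \<beta>) \<in> pg_points" using phinz by (rule pg_pointsI)
    then obtain P where P: "P \<in> B" "incident P (proj_class (\<phi> \<alpha> \<beta>))" using bl phih[OF nz] by blast
    have Pp: "P \<in> pg_points" using P B by auto
    have inc: "dot3 (rep P) (\<phi> \<alpha> \<beta>) = 0" using P(2) rep[OF Pp] phinz incident_iff by metis
    have "P \<noteq> P0"
    proof
      assume "P = P0"
      hence "dot3 v0 (\<phi> \<alpha> \<beta>) = 0" using P(2) v0 phinz incident_iff by metis
      thus False using d0phi d0 by simp
    qed
    hence "P \<in> B'" using P B'_def by auto
    thus ?thesis unfolding F_def using inc dphi by (intro prod_zero) (auto intro!: bexI[of _ P])
  qed
  have F0: "F 0 0 \<noteq> 0"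
    unfolding F_def
  proof (simp add: prod_zero_iff[OF finB'], intro ballI)
    fix P assume "P \<in> B'"
    hence Pp: "P \<in> pg_points" "P \<in> B" using B B'_def by auto
    show "dot3 (rep P) w0 \<noteq> 0" using nh Pp rep[OF Pp(1)] w0 incident_iff by metis
  qed
  have inner: "(\<Sum>\<beta>\<in>UNIV. F \<alpha> \<beta>) = (if \<alpha> = 0 then F 0 0 else 0)" for \<alpha>
  proof (cases "\<alpha> = 0")
    case True
    have eq: "F \<alpha> = (\<lambda>\<beta>. if \<beta> = 0 then F 0 0 else 0)"
      by (rule ext) (use True Fz in auto)
    have "(\<Sum>\<beta>\<in>UNIV. F \<alpha> \<beta>) = (\<Sum>\<beta>\<in>UNIV. if \<beta> = (0::'a) then F 0 0 else 0)"
      by (simp only: eq)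
    also have "\<dots> = F 0 0" by (simp add: sum.delta)
    finally show ?thesis using True by simp
  next
    case False
    thus ?thesis using Fz by simp
  qed
  have sumF: "(\<Sum>\<alpha>\<in>UNIV. \<Sum>\<beta>\<in>UNIV. F \<alpha> \<beta>) = F 0 0"
    by (simp only: inner) (simp add: sum.delta)
  show ?thesis
  proof (rule ccontr)
    assume nt: "\<not> ?thesis"
    have cB: "0 < card B" using P0 card_gt_0_iff by fastforce
    have "card B' = card B - 1" using P0 B'_def by (simp add: card_Diff_singleton)
    hence "card B' < 2 * (?q - 1)" using cB q2 nt by linarith
    hence "(\<Sum>\<alpha>\<in>UNIV. \<Sum>\<beta>\<in>UNIV. F \<alpha> \<beta>) = 0" unfolding F_def
      by (rule poly2_sum_zero[OF finB', of "\<lambda>P. dot3 (rep P) w0" "\<lambda>P. dot3 (rep P) e1" "\<lambda>P. dot3 (rep P) e2"])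
    thus False using sumF F0 by simp
  qed
qed

lemma pairing:
  fixes S :: "'l set" and g :: "'l \<Rightarrow> 'c" and R :: "'p \<Rightarrow> 'l \<Rightarrow> bool"
  assumes "finite S"
    and "\<forall>c. 2 * card {s\<in>S. g s = c} \<le> card S + 1"
    and "\<forall>s1\<in>S. \<forall>s2\<in>S. g s1 \<noteq> g s2 \<longrightarrow> (\<exists>p. R p s1 \<and> R p s2)"
    and "\<forall>s\<in>S. \<exists>p. R p s"
  shows "\<exists>T. finite T \<and> 2 * card T \<le> card S + 1 \<and> (\<forall>s\<in>S. \<exists>p\<in>T. R p s)"
  using assms
proof (induction "card S" arbitrary: S rule: less_induct)
  case less
  note fin = less.prems(1) and grp = less.prems(2) and pr = less.prems(3) and pk = less.prems(4)
  show ?case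
  proof (cases "card S \<le> 1")
    case True
    define T where "T = (\<lambda>s. SOME p. R p s) ` S"
    have "card T \<le> card S" unfolding T_def using fin by (rule card_image_le)
    moreover have "\<forall>s\<in>S. \<exists>p\<in>T. R p s"
    proof
      fix s assume s: "s \<in> S"
      hence "R (SOME p. R p s) s" using pk by (meson someI_ex)
      thus "\<exists>p\<in>T. R p s" unfolding T_def using s by blast
    qed
    ultimately show ?thesis using True fin T_def by (intro exI[of _ T]) auto
  next
    case False
    define f where "f s = card {x\<in>S. g x = g s}" for s
    have Sne: "S \<noteq> {}" using False by auto
    have "Max (f ` S) \<in> f ` S" using fin Sne by (intro Max_in) auto
    then obtain s1 where s1a: "s1 \<in> S" "f s1 = Max (f ` S)" by auto
    have s1: "s1 \<in> S" "\<forall>s\<in>S. f s \<le> f s1" using s1a fin by auto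
    define S2 where "S2 = {s\<in>S. g s \<noteq> g s1}"
    have "S2 \<noteq> {}"
    proof
      assume "S2 = {}"
      hence "{x\<in>S. g x = g s1} = S" unfolding S2_def by auto
      thus False using grp[rule_format, of "g s1"] False by simp
    qed
    have finS2: "finite S2" using fin S2_def by auto
    have "Max (f ` S2) \<in> f ` S2" using finS2 \<open>S2 \<noteq> {}\<close> by (intro Max_in) auto
    then obtain s2 where s2a: "s2 \<in> S2" "f s2 = Max (f ` S2)" by auto
    have s2: "s2 \<in> S2" "\<forall>s\<in>S2. f s \<le> f s2" using s2a finS2 by auto
    have s2S: "s2 \<in> S" "g s2 \<noteq> g s1" using s2 S2_def by auto
    obtain p where p: "R p s1" "R p s2" using pr s1(1) s2S by metis
    define S' where "S' = S - {s1, s2}"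
    have s12: "s1 \<noteq> s2" using s2S by auto
    have cS': "card S' = card S - 2" unfolding S'_def using s1(1) s2S(1) s12 fin
      by (simp add: card_Diff_subset)
    have grp': "\<forall>c. 2 * card {s\<in>S'. g s = c} \<le> card S' + 1"
    proof
      fix c
      show "2 * card {s\<in>S'. g s = c} \<le> card S' + 1"
      proof (cases "c = g s1 \<or> c = g s2")
        case True
        then obtain s0 where s0: "s0 \<in> {s1, s2}" "c = g s0" by auto
        have "{s\<in>S'. g s = c} \<subseteq> {x\<in>S. g x = g s0} - {s0}" using s0 S'_def by auto
        hence "card {s\<in>S'. g s = c} \<le> card ({x\<in>S. g x = g s0} - {s0})"
          using fin by (intro card_mono) auto
        also have "\<dots> = card {x\<in>S. g x = g s0} - 1"
          using s0 s1(1) s2S(1) fin by (subst card_Diff_singleton) auto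
        finally have "card {s\<in>S'. g s = c} \<le> card {x\<in>S. g x = g s0} - 1" .
        moreover have "2 * card {x\<in>S. g x = g s0} \<le> card S + 1" using grp by blast
        ultimately show ?thesis using cS' False by linarith
      next
        case False2: False
        define G where "G = {s\<in>S. g s = c}"
        have eqG: "{s\<in>S'. g s = c} = G" unfolding G_def S'_def using False2 by auto
        show ?thesis
        proof (cases "G = {}")
          case True
          hence e: "{s\<in>S'. g s = c} = {}" using eqG by simp
          show ?thesis by (simp only: e card.empty)
        next
          case Gne: False
          then obtain s3 where s3: "s3 \<in> S" "g s3 = c" unfolding G_def by auto
          have "s3 \<in> S2" using s3 False2 S2_def by auto
          hence "f s3 \<le> f s2" using s2 by blast
          moreover have "f s2 \<le> f s1" using s1 s2S by blast
          moreover have fs3: "f s3 = card G" unfolding f_def G_def using s3 by simp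
          moreover have "f s1 + f s2 + f s3 \<le> card S"
          proof -
            let ?A = "{x\<in>S. g x = g s1}" and ?B = "{x\<in>S. g x = g s2}" and ?C = "{x\<in>S. g x = g s3}"
            have "card (?A \<union> ?B \<union> ?C) = card ?A + card ?B + card ?C"
              using fin s2S False2 s3 by (subst card_Un_disjoint, auto)+
            moreover have "card (?A \<union> ?B \<union> ?C) \<le> card S" using fin by (intro card_mono) auto
            ultimately show ?thesis unfolding f_def by simp
          qed
          moreover have "1 \<le> card G" using Gne fin G_def by (simp add: Suc_le_eq card_gt_0_iff)
          ultimately show ?thesis unfolding eqG using cS' False by linarith
        qed
      qed
    qed
    have h1: "card S' < card S" using cS' False by linarith
    have h2: "finite S'" using fin S'_def by auto
    have h3: "\<forall>s1\<in>S'. \<forall>s2\<in>S'. g s1 \<noteq> g s2 \<longrightarrow> (\<exists>p. R p s1 \<and> R p s2)"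
      using pr S'_def by blast
    have h4: "\<forall>s\<in>S'. \<exists>p. R p s" using pk S'_def by blast
    obtain T' where T': "finite T'" "2 * card T' \<le> card S' + 1" "\<forall>s\<in>S'. \<exists>p\<in>T'. R p s"
      using less.hyps[OF h1 h2 grp' h3 h4] by blast
    show ?thesis
    proof (intro exI[of _ "insert p T'"] conjI)
      show "finite (insert p T')" using T' by simp
      have "card (insert p T') \<le> card T' + 1" using T'(1) by (simp add: card_insert_if)
      thus "2 * card (insert p T') \<le> card S + 1" using T'(2) cS' False by linarith
      show "\<forall>s\<in>S. \<exists>p'\<in>insert p T'. R p' s"
      proof
        fix s assume "s \<in> S"
        show "\<exists>p'\<in>insert p T'. R p' s"
        proof (cases "s = s1 \<or> s = s2")
          case True thus ?thesis using p by blast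
        next
          case False
          hence "s \<in> S'" using \<open>s \<in> S\<close> S'_def by blast
          thus ?thesis using T'(3) by blast
        qed
      qed
    qed
  qed
qed

abbreviation PG :: "'a::{field,finite} vec3 set set" where "PG \<equiv> pg_points"

lemma two_lines_pt_eq:
  assumes "L \<in> PG" "L' \<in> PG" "L \<noteq> L'" "P \<in> PG" "P' \<in> PG"
    "incident P L" "incident P L'" "incident P' L" "incident P' L'"
  shows "P = P'"
proof (rule ccontr)
  assume "P \<noteq> P'"
  hence "L = L'" using line_unique[OF assms(4,5) _ assms(1,2) assms(6,8,7,9)] by blast
  thus False using assms(3) by simp
qed

lemma meet_exists:
  assumes "L \<in> PG" "L' \<in> PG" "L \<noteq> L'"
  shows "\<exists>P\<in>PG. incident P L \<and> incident P L'"
  using line_exists[OF assms] incident_sym by metis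

lemma lines_through:
  assumes "P \<in> PG"
  shows "card (UNIV::'a::{field,finite} set) + 1 \<le> card {L\<in>PG. incident (P::'a vec3 set) L}"
proof -
  have "{L\<in>PG. incident P L} = {L\<in>PG. incident L P}" using incident_sym by blast
  thus ?thesis using card_line[OF assms] by simp
qed

lemma two_elems:
  assumes "finite X" "2 \<le> card X"
  shows "\<exists>a\<in>X. \<exists>b\<in>X. a \<noteq> b"
  using assms card_le_Suc0_iff_eq[OF assms(1)] by auto

lemma point_off:
  assumes "L \<in> PG" "h \<in> PG" "L \<noteq> h"
  shows "\<exists>P\<in>PG. incident P L \<and> \<not> incident P (h::'a::{field,finite} vec3 set)"
proof (rule ccontr)
  assume "\<not> ?thesis"
  hence all: "\<forall>P\<in>PG. incident P L \<longrightarrow> incident P h" by blast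
  have "card (UNIV::'a set) + 1 \<le> card {P\<in>PG. incident P L}" by (rule card_line[OF assms(1)])
  hence "2 \<le> card {P\<in>PG. incident P L}" using card_ge2[where 'a='a] by linarith
  then obtain a b where ab: "a \<in> PG" "b \<in> PG" "incident a L" "incident b L" "a \<noteq> b"
    using two_elems[of "{P\<in>PG. incident P L}"] by auto
  hence "L = h" using all line_unique[OF ab(1,2,5) assms(1,2) ab(3,4)] ab by blast
  thus False using assms by simp
qed

lemma np_points:
  fixes PD LD :: "('a::{field,finite}) vec3 set set"
  assumes "\<not> primal (card (UNIV::'a set)) PD LD" "P \<in> PG"
  shows "card {L\<in>LD. incident P L} \<le> card (UNIV::'a set) - 1"
proof (rule ccontr)
  assume "\<not> ?thesis"
  hence "card (UNIV::'a set) \<le> card {L\<in>LD. incident P L}" by linarith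
  then obtain S where S: "S \<subseteq> {L\<in>LD. incident P L}" "card S = card (UNIV::'a set)"
    by (rule obtain_subset_with_card_n)
  have "S \<subseteq> LD \<and> card S = card (UNIV::'a set) \<and> (\<exists>P\<in>pg_points. \<forall>L\<in>S. incident P L)"
    using S assms(2) by blast
  hence "primal (card (UNIV::'a set)) PD LD" unfolding primal_def by (intro disjI1 exI[of _ S])
  thus False using assms(1) by simp
qed

lemma np_lines:
  fixes PD LD :: "('a::{field,finite}) vec3 set set"
  assumes "\<not> primal (card (UNIV::'a set)) PD LD" "L \<in> PG"
  shows "card {P\<in>PD. incident P L} \<le> card (UNIV::'a set) - 1"
proof (rule ccontr)
  assume "\<not> ?thesis"
  hence "card (UNIV::'a set) \<le> card {P\<in>PD. incident P L}" by linarith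
  then obtain S where S: "S \<subseteq> {P\<in>PD. incident P L}" "card S = card (UNIV::'a set)"
    by (rule obtain_subset_with_card_n)
  have "S \<subseteq> PD \<and> card S = card (UNIV::'a set) \<and> (\<exists>L\<in>pg_lines. \<forall>P\<in>S. incident P L)"
    using S assms(2) unfolding pg_lines_eq by blast
  hence "primal (card (UNIV::'a set)) PD LD" unfolding primal_def by (intro disjI2 exI[of _ S])
  thus False using assms(1) by simp
qed

lemma main_blocking:
  fixes PD LD :: "('a::{field,finite}) vec3 set set"
  assumes dom: "dominating PD LD" and np: "\<not> primal (card (UNIV::'a set)) PD LD"
    and sz: "card PD + card LD + card PD \<le> 4 * card (UNIV::'a set) - 3"
  shows "blocking_set PD"
proof -
  define q where "q = card (UNIV::'a set)"
  have q2: "2 \<le> q" unfolding q_def by (rule card_ge2)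
  have PDs: "PD \<subseteq> PG" and LDs: "LD \<subseteq> PG"
    and cov: "\<forall>P\<in>PG - PD. \<exists>L\<in>LD. incident P L"
    and blk: "\<forall>L\<in>PG - LD. \<exists>P\<in>PD. incident P L"
    using dom unfolding dominating_def pg_lines_eq by auto
  have NP1: "card {L\<in>LD. incident P L} \<le> q - 1" if "P \<in> PG" for P
    unfolding q_def by (rule np_points[OF np that])
  have NP2: "card {P\<in>PD. incident P L} \<le> q - 1" if "L \<in> PG" for L
    unfolding q_def by (rule np_lines[OF np that])
  define x where "x = card PD"
  define t where "t = card LD"
  have sz': "2 * x + t \<le> 4 * q - 3" using sz unfolding x_def t_def q_def by simp
  show ?thesis
  proof (rule ccontr)
    assume "\<not> blocking_set PD"
    then obtain l0 where l0: "l0 \<in> PG" "\<forall>P\<in>PD. \<not> incident P l0"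
      using PDs unfolding blocking_set_def pg_lines_eq by blast
    define M where "M = {L\<in>PG. \<forall>P\<in>PD. \<not> incident P L}"
    have MLD: "M \<subseteq> LD" using blk unfolding M_def by blast
    have l0M: "l0 \<in> M" using l0 unfolding M_def by blast
    define N where "N = card M"
    have N1: "1 \<le> N" unfolding N_def using l0M by (auto simp: Suc_le_eq card_gt_0_iff)
    have Nt: "N \<le> t" unfolding N_def t_def using MLD by (intro card_mono) auto
    have keyA: "2 * q - 1 \<le> x + card T"
      if h: "h \<in> M" and T: "T \<subseteq> PG" "\<forall>p\<in>T. \<not> incident p h" "\<forall>L\<in>M - {h}. \<exists>p\<in>T. incident p L"
      for h T
    proof -
      have hPG: "h \<in> PG" using h M_def by auto
      have "2 * q - 1 \<le> card (PD \<union> T)" unfolding q_def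
      proof (rule jamison[OF hPG])
        show "PD \<union> T \<subseteq> PG" using PDs T by auto
        show "\<forall>P\<in>PD \<union> T. \<not> incident P h" using T h M_def by auto
        show "\<forall>L\<in>PG. L \<noteq> h \<longrightarrow> (\<exists>P\<in>PD \<union> T. incident P L)"
        proof (intro ballI impI)
          fix L assume L: "L \<in> PG" "L \<noteq> h"
          show "\<exists>P\<in>PD \<union> T. incident P L"
          proof (cases "L \<in> M")
            case True thus ?thesis using T L by blast
          next
            case False thus ?thesis using L unfolding M_def by blast
          qed
        qed
      qed
      also have "\<dots> \<le> x + card T" unfolding x_def by (rule card_Un_le)
      finally show ?thesis .
    qed
    show False
    proof (cases "\<exists>h\<in>M. \<forall>P\<in>PG. incident P h \<longrightarrow> 2 * card {L\<in>M - {h}. incident P L} \<le> N")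
      case True
      then obtain h where h: "h \<in> M" "\<forall>P\<in>PG. incident P h \<longrightarrow> 2 * card {L\<in>M - {h}. incident P L} \<le> N"
        by blast
      have hPG: "h \<in> PG" using h M_def by auto
      define S where "S = M - {h}"
      have cS: "card S + 1 = N" unfolding S_def N_def using h(1) N1 N_def
        by (simp add: card_Diff_singleton)
      define g where "g L = (SOME P. P \<in> PG \<and> incident P L \<and> incident P h)" for L
      have g: "g L \<in> PG \<and> incident (g L) L \<and> incident (g L) h" if "L \<in> S" for L
      proof -
        have "L \<in> PG" "L \<noteq> h" using that S_def M_def by auto
        hence "\<exists>P. P \<in> PG \<and> incident P L \<and> incident P h" using meet_exists hPG by blast
        thus ?thesis unfolding g_def by (rule someI_ex)
      qed
      define R where "R p L = (p \<in> PG \<and> incident p L \<and> \<not> incident p h)" for p L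
      have "\<exists>T. finite T \<and> 2 * card T \<le> card S + 1 \<and> (\<forall>s\<in>S. \<exists>p\<in>T. R p s)"
      proof (rule pairing)
        show "finite S" by simp
        show "\<forall>c. 2 * card {s\<in>S. g s = c} \<le> card S + 1"
        proof
          fix c
          show "2 * card {s\<in>S. g s = c} \<le> card S + 1"
          proof (cases "{s\<in>S. g s = c} = {}")
            case True
            show ?thesis by (simp only: True card.empty)
          next
            case False
            then obtain s0 where s0: "s0 \<in> S" "g s0 = c" by auto
            have c: "c \<in> PG" "incident c h" using g[OF s0(1)] s0 by auto
            have "{s\<in>S. g s = c} \<subseteq> {L\<in>M - {h}. incident c L}"
              using g S_def by auto
            hence "card {s\<in>S. g s = c} \<le> card {L\<in>M - {h}. incident c L}" by (intro card_mono) auto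
            thus ?thesis using h(2) c cS by fastforce
          qed
        qed
        show "\<forall>s1\<in>S. \<forall>s2\<in>S. g s1 \<noteq> g s2 \<longrightarrow> (\<exists>p. R p s1 \<and> R p s2)"
        proof (intro ballI impI)
          fix s1 s2 assume s: "s1 \<in> S" "s2 \<in> S" "g s1 \<noteq> g s2"
          have ne: "s1 \<noteq> s2" using s by auto
          have sP: "s1 \<in> PG" "s2 \<in> PG" "s1 \<noteq> h" "s2 \<noteq> h" using s S_def M_def by auto
          obtain p where p: "p \<in> PG" "incident p s1" "incident p s2" using meet_exists[OF sP(1,2) ne] by blast
          have "\<not> incident p h"
          proof
            assume ph: "incident p h"
            have g1: "g s1 \<in> PG" "incident (g s1) s1" "incident (g s1) h" using g[OF s(1)] by auto
            have g2: "g s2 \<in> PG" "incident (g s2) s2" "incident (g s2) h" using g[OF s(2)] by auto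
            have "p = g s1" by (rule two_lines_pt_eq[OF sP(1) hPG sP(3) p(1) g1(1) p(2) ph g1(2,3)])
            moreover have "p = g s2" by (rule two_lines_pt_eq[OF sP(2) hPG sP(4) p(1) g2(1) p(3) ph g2(2,3)])
            ultimately show False using s(3) by simp
          qed
          thus "\<exists>p. R p s1 \<and> R p s2" unfolding R_def using p by blast
        qed
        show "\<forall>s\<in>S. \<exists>p. R p s"
        proof
          fix s assume "s \<in> S"
          hence "s \<in> PG" "s \<noteq> h" using S_def M_def by auto
          thus "\<exists>p. R p s" unfolding R_def using point_off[OF _ hPG] by blast
        qed
      qed
      then obtain T where T: "finite T" "2 * card T \<le> N" "\<forall>s\<in>S. \<exists>p\<in>T. R p s"
        using cS by auto
      define T0 where "T0 = {p\<in>T. p \<in> PG \<and> \<not> incident p h}"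
      have "card T0 \<le> card T" unfolding T0_def using T(1) by (intro card_mono) auto
      moreover have "2 * q - 1 \<le> x + card T0"
      proof (rule keyA[OF h(1)])
        show "T0 \<subseteq> PG" "\<forall>p\<in>T0. \<not> incident p h" unfolding T0_def by auto
        show "\<forall>L\<in>M - {h}. \<exists>p\<in>T0. incident p L" using T(3) unfolding S_def R_def T0_def by blast
      qed
      ultimately show False using T(2) Nt sz' q2 by linarith
    next
      case False
      hence big: "\<forall>h\<in>M. \<exists>P\<in>PG. incident P h \<and> N < 2 * card {L\<in>M - {h}. incident P L}"
        by (meson not_le)
      obtain Q where Q: "Q \<in> PG" "incident Q l0" "N < 2 * card {L\<in>M - {l0}. incident Q L}"
        using big l0M by blast
      have pencil: "incident Q h" if hM: "h \<in> M" for h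
      proof -
        obtain P where P: "P \<in> PG" "incident P h" "N < 2 * card {L\<in>M - {h}. incident P L}"
          using big hM by blast
        show ?thesis
        proof (cases "P = Q")
          case True thus ?thesis using P by simp
        next
          case PQ: False
          define A where "A = {L\<in>M. incident P L}"
          define B where "B = {L\<in>M. incident Q L}"
          have hA: "h \<in> A" using hM P A_def by auto
          have lB: "l0 \<in> B" using l0M Q B_def by auto
          have e1: "{L\<in>M - {h}. incident P L} = A - {h}" unfolding A_def by auto
          have e2: "{L\<in>M - {l0}. incident Q L} = B - {l0}" unfolding B_def by auto
          have cA: "card (A - {h}) = card A - 1" using hA by (simp add: card_Diff_singleton)
          have cB: "card (B - {l0}) = card B - 1" using lB by (simp add: card_Diff_singleton)
          have AB1: "card (A \<inter> B) \<le> Suc 0"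
          proof (subst card_le_Suc0_iff_eq)
            show "finite (A \<inter> B)" by simp
            show "\<forall>a1\<in>A \<inter> B. \<forall>a2\<in>A \<inter> B. a1 = a2"
            proof (intro ballI)
              fix a1 a2 assume a: "a1 \<in> A \<inter> B" "a2 \<in> A \<inter> B"
              hence a': "a1 \<in> PG" "a2 \<in> PG" "incident P a1" "incident Q a1" "incident P a2" "incident Q a2"
                unfolding A_def B_def M_def by auto
              show "a1 = a2" by (rule line_unique[OF P(1) Q(1) PQ a'(1,2) a'(3,4,5,6)])
            qed
          qed
          have "card (A \<union> B) \<le> N" unfolding N_def A_def B_def by (intro card_mono) auto
          moreover have "card A + card B = card (A \<union> B) + card (A \<inter> B)" by (rule card_Un_Int) auto
          moreover have "N < 2 * (card A - 1)" using P(3) e1 cA by simp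
          moreover have "N < 2 * (card B - 1)" using Q(3) e2 cB by simp
          ultimately have False using AB1 by linarith
          thus ?thesis ..
        qed
      qed
      define pk where "pk L = (SOME p. p \<in> PG \<and> incident p L \<and> \<not> incident p l0)" for L
      have pk: "pk L \<in> PG \<and> incident (pk L) L \<and> \<not> incident (pk L) l0" if "L \<in> M - {l0}" for L
      proof -
        have "L \<in> PG" "L \<noteq> l0" using that M_def by auto
        hence "\<exists>p. p \<in> PG \<and> incident p L \<and> \<not> incident p l0" using point_off l0(1) by blast
        thus ?thesis unfolding pk_def by (rule someI_ex)
      qed
      define T0 where "T0 = pk ` (M - {l0})"
      have "2 * q - 1 \<le> x + card T0"
      proof (rule keyA[OF l0M])
        show "T0 \<subseteq> PG" "\<forall>p\<in>T0. \<not> incident p l0" using pk unfolding T0_def by auto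
        show "\<forall>L\<in>M - {l0}. \<exists>p\<in>T0. incident p L" using pk unfolding T0_def by blast
      qed
      moreover have "card T0 \<le> card (M - {l0})" unfolding T0_def by (rule card_image_le) simp
      moreover have "card (M - {l0}) = N - 1" unfolding N_def using l0M by (simp add: card_Diff_singleton)
      ultimately have xN: "2 * q \<le> x + N" using N1 by linarith
      have Ql0: "Q \<notin> PD" using l0 Q by blast
      define LQ where "LQ = {L\<in>LD. incident Q L}"
      have MLQ: "M \<subseteq> LQ" unfolding LQ_def using MLD pencil by blast
      have NLQ: "N \<le> card LQ" unfolding N_def by (rule card_mono) (simp_all add: MLQ)
      have LQq: "card LQ \<le> q - 1" unfolding LQ_def by (rule NP1[OF Q(1)])
      define s where "s = card (LD - LQ)"
      have ts: "t = card LQ + s" unfolding t_def s_def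
        using card_Diff_subset[of LQ LD] card_mono[of LD LQ] by (simp add: LQ_def)
      show False
      proof (cases "N \<le> s + 2")
        case True thus False using xN ts NLQ sz' q2 by linarith
      next
        case Ns: False
        have "\<not> {L\<in>PG. incident Q L} \<subseteq> LD"
        proof
          assume "{L\<in>PG. incident Q L} \<subseteq> LD"
          hence "{L\<in>PG. incident Q L} \<subseteq> LQ" unfolding LQ_def by auto
          hence "card {L\<in>PG. incident Q L} \<le> card LQ" by (intro card_mono) auto
          thus False using lines_through[OF Q(1)] LQq q_def by linarith
        qed
        then obtain \<rho> where \<rho>: "\<rho> \<in> PG" "incident Q \<rho>" "\<rho> \<notin> LD" by blast
        define P\<rho> where "P\<rho> = {P\<in>PG. incident P \<rho>}"
        define D\<rho> where "D\<rho> = {P\<in>PD. incident P \<rho>}"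
        define c1 where "c1 = card D\<rho>"
        have c1q: "c1 \<le> q - 1" unfolding c1_def D\<rho>_def by (rule NP2[OF \<rho>(1)])
        have cP\<rho>: "q + 1 \<le> card P\<rho>" unfolding P\<rho>_def q_def by (rule card_line[OF \<rho>(1)])
        define Z where "Z = P\<rho> - {Q} - PD"
        have "P\<rho> \<subseteq> Z \<union> {Q} \<union> D\<rho>" unfolding Z_def D\<rho>_def P\<rho>_def by auto
        hence "card P\<rho> \<le> card (Z \<union> {Q} \<union> D\<rho>)" by (intro card_mono) auto
        also have "\<dots> \<le> card Z + 1 + c1" unfolding c1_def
          using card_Un_le[of "Z \<union> {Q}" D\<rho>] card_Un_le[of Z "{Q}"] by simp
        finally have cZ1: "card P\<rho> \<le> card Z + 1 + c1" .
        define fL where "fL P = (SOME L. L \<in> LD \<and> incident P L)" for P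
        have fL: "fL P \<in> LD \<and> incident P (fL P)" if "P \<in> Z" for P
        proof -
          have "P \<in> PG - PD" using that Z_def P\<rho>_def by auto
          hence "\<exists>L. L \<in> LD \<and> incident P L" using cov by blast
          thus ?thesis unfolding fL_def by (rule someI_ex)
        qed
        have fLrho: "fL P = \<rho>" if "P \<in> Z" "P' \<in> PG" "P' \<noteq> P" "incident P' \<rho>" "incident P' (fL P)" for P P'
        proof -
          have "P \<in> PG" "incident P \<rho>" using that(1) Z_def P\<rho>_def by auto
          moreover have "fL P \<in> PG" using fL[OF that(1)] LDs by auto
          moreover have "incident P (fL P)" using fL[OF that(1)] by auto
          ultimately show ?thesis
            using line_unique[OF _ that(2) that(3)[symmetric] _ \<rho>(1) _ that(5) _ that(4)] by blast
        qed
        have "card Z \<le> s"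
        proof -
          have "inj_on fL Z"
          proof
            fix P1 P2 assume P: "P1 \<in> Z" "P2 \<in> Z" "fL P1 = fL P2"
            show "P1 = P2"
            proof (rule ccontr)
              assume ne: "P1 \<noteq> P2"
              have "P2 \<in> PG" "incident P2 \<rho>" using P(2) Z_def P\<rho>_def by auto
              hence "fL P1 = \<rho>" using fLrho[OF P(1) _ ne[symmetric]] fL[OF P(2)] P(3) by auto
              thus False using fL[OF P(1)] \<rho>(3) by simp
            qed
          qed
          moreover have "fL ` Z \<subseteq> LD - LQ"
          proof
            fix L assume "L \<in> fL ` Z"
            then obtain P where P: "P \<in> Z" "L = fL P" by auto
            have "\<not> incident Q L"
            proof
              assume "incident Q L"
              hence "fL P = \<rho>" using fLrho[OF P(1) Q(1)] P Z_def \<rho>(2) by auto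
              thus False using fL[OF P(1)] \<rho>(3) by simp
            qed
            thus "L \<in> LD - LQ" using fL[OF P(1)] P(2) LQ_def by auto
          qed
          ultimately show ?thesis unfolding s_def using card_inj_on_le[of fL Z "LD - LQ"] by simp
        qed
        hence qsc1: "q \<le> s + c1" using cZ1 cP\<rho> by linarith
        have "1 \<le> card Z" using cZ1 cP\<rho> c1q q2 by linarith
        hence "Z \<noteq> {}" by auto
        then obtain u where u: "u \<in> Z" by blast
        have uprops: "u \<in> PG" "incident u \<rho>" "u \<noteq> Q" "u \<notin> PD" using u Z_def P\<rho>_def by auto
        have "\<not> {L\<in>PG. incident Q L} \<subseteq> {\<rho>, l0}"
        proof
          assume "{L\<in>PG. incident Q L} \<subseteq> {\<rho>, l0}"
          hence "card {L\<in>PG. incident Q L} \<le> card {\<rho>, l0}" by (intro card_mono) auto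
          moreover have "card {\<rho>, l0} \<le> 2" by (simp add: card_insert_if)
          ultimately show False using lines_through[OF Q(1)] q2 q_def by linarith
        qed
        then obtain \<rho>2 where \<rho>2: "\<rho>2 \<in> PG" "incident Q \<rho>2" "\<rho>2 \<noteq> \<rho>" "\<rho>2 \<noteq> l0" by blast
        define P\<rho>2 where "P\<rho>2 = {P\<in>PG. incident P \<rho>2}"
        define D\<rho>2 where "D\<rho>2 = {P\<in>PD. incident P \<rho>2}"
        define c2 where "c2 = card D\<rho>2"
        have cP\<rho>2: "q + 1 \<le> card P\<rho>2" unfolding P\<rho>2_def q_def by (rule card_line[OF \<rho>2(1)])
        define U2 where "U2 = P\<rho>2 - {Q} - PD"
        have "P\<rho>2 \<subseteq> U2 \<union> {Q} \<union> D\<rho>2" unfolding U2_def D\<rho>2_def P\<rho>2_def by auto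
        hence "card P\<rho>2 \<le> card (U2 \<union> {Q} \<union> D\<rho>2)" by (intro card_mono) auto
        also have "\<dots> \<le> card U2 + 1 + c2" unfolding c2_def
          using card_Un_le[of "U2 \<union> {Q}" D\<rho>2] card_Un_le[of U2 "{Q}"] by simp
        finally have cU2: "card P\<rho>2 \<le> card U2 + 1 + c2" .
        have rr: "P = Q" if "P \<in> PG" "incident P \<rho>" "incident P \<rho>2" for P
          using two_lines_pt_eq[OF \<rho>(1) \<rho>2(1) \<rho>2(3)[symmetric] that(1) Q(1) that(2,3) \<rho>(2) \<rho>2(2)] .
        define Lu where "Lu v = (SOME L. L \<in> PG \<and> incident u L \<and> incident v L)" for v
        have Lu: "Lu v \<in> PG \<and> incident u (Lu v) \<and> incident v (Lu v) \<and> Lu v \<noteq> \<rho> \<and> Lu v \<noteq> \<rho>2 \<and> Lu v \<notin> M"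
          if v: "v \<in> U2" for v
        proof -
          have vp: "v \<in> PG" "incident v \<rho>2" "v \<noteq> Q" "v \<notin> PD" using v U2_def P\<rho>2_def by auto
          have uv: "u \<noteq> v" using rr[OF uprops(1,2)] uprops(3) vp(2) by auto
          have "\<exists>L. L \<in> PG \<and> incident u L \<and> incident v L" using line_exists[OF uprops(1) vp(1) uv] by blast
          hence "Lu v \<in> PG \<and> incident u (Lu v) \<and> incident v (Lu v)" unfolding Lu_def by (rule someI_ex)
          hence L: "Lu v \<in> PG" "incident u (Lu v)" "incident v (Lu v)" by auto
          have n1: "Lu v \<noteq> \<rho>" using L rr[OF vp(1)] vp by auto
          have n2: "Lu v \<noteq> \<rho>2" using L rr[OF uprops(1)] uprops by auto
          have "Lu v \<notin> M"
          proof
            assume "Lu v \<in> M"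
            hence "incident Q (Lu v)" by (rule pencil)
            hence "Lu v = \<rho>" by (rule line_unique[OF uprops(1) Q(1) uprops(3) L(1) \<rho>(1) L(2) _ uprops(2) \<rho>(2)])
            thus False using n1 by simp
          qed
          thus ?thesis using L n1 n2 by blast
        qed
        define gz where "gz v = (SOME z. z \<in> PD \<and> incident z (Lu v))" for v
        define W where "W = {z\<in>PD. \<not> incident z \<rho> \<and> \<not> incident z \<rho>2}"
        have gz: "gz v \<in> W \<and> incident (gz v) (Lu v)" if v: "v \<in> U2" for v
        proof -
          have vp: "v \<in> PG" "incident v \<rho>2" "v \<noteq> Q" "v \<notin> PD" using v U2_def P\<rho>2_def by auto
          have LvP: "Lu v \<in> PG" "Lu v \<notin> M" "incident u (Lu v)" "incident v (Lu v)" using Lu[OF v] by auto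
          have "\<not> (\<forall>P\<in>PD. \<not> incident P (Lu v))" using LvP(1,2) unfolding M_def by blast
          hence "\<exists>z. z \<in> PD \<and> incident z (Lu v)" by blast
          hence "gz v \<in> PD \<and> incident (gz v) (Lu v)" unfolding gz_def by (rule someI_ex)
          hence z: "gz v \<in> PD" "incident (gz v) (Lu v)" by auto
          have zPG: "gz v \<in> PG" using z PDs by auto
          have "\<not> incident (gz v) \<rho>"
          proof
            assume zr: "incident (gz v) \<rho>"
            have zu: "gz v \<noteq> u" using z(1) uprops(4) by blast
            have "Lu v = \<rho>" by (rule line_unique[OF zPG uprops(1) zu LvP(1) \<rho>(1) z(2) LvP(3) zr uprops(2)])
            thus False using Lu[OF v] by simp
          qed
          moreover have "\<not> incident (gz v) \<rho>2"
          proof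
            assume zr: "incident (gz v) \<rho>2"
            have zv: "gz v \<noteq> v" using z(1) vp(4) by metis
            have "Lu v = \<rho>2" by (rule line_unique[OF zPG vp(1) zv LvP(1) \<rho>2(1) z(2) LvP(4) zr vp(2)])
            thus False using Lu[OF v] by simp
          qed
          ultimately show ?thesis using z W_def by auto
        qed
        have "card U2 \<le> card W"
        proof -
          have "inj_on gz U2"
          proof
            fix a b assume ab: "a \<in> U2" "b \<in> U2" "gz a = gz b"
            have zPG: "gz a \<in> PG" using gz[OF ab(1)] W_def PDs by auto
            have zu: "gz a \<noteq> u" using gz[OF ab(1)] W_def uprops by auto
            have La: "Lu a \<in> PG" "incident u (Lu a)" "incident a (Lu a)" "Lu a \<noteq> \<rho>2" using Lu[OF ab(1)] by auto
            have Lb: "Lu b \<in> PG" "incident u (Lu b)" "incident b (Lu b)" using Lu[OF ab(2)] by auto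
            have za: "incident (gz a) (Lu a)" using gz[OF ab(1)] by auto
            have zb: "incident (gz a) (Lu b)" using gz[OF ab(2)] ab(3) by auto
            have eqL: "Lu a = Lu b"
              by (rule line_unique[OF zPG uprops(1) zu La(1) Lb(1) za La(2) zb Lb(2)])
            have ap: "a \<in> PG" "incident a \<rho>2" "b \<in> PG" "incident b \<rho>2" using ab U2_def P\<rho>2_def by auto
            have bLa: "incident b (Lu a)" using Lb(3) eqL by simp
            show "a = b"
              by (rule two_lines_pt_eq[OF La(1) \<rho>2(1) La(4) ap(1) ap(3) La(3) ap(2) bLa ap(4)])
          qed
          moreover have "gz ` U2 \<subseteq> W" using gz by auto
          ultimately show ?thesis using card_inj_on_le[of gz U2 W] by simp
        qed
        moreover have "card W + c1 + c2 \<le> x"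
        proof -
          have d1: "W \<inter> D\<rho> = {}" "W \<inter> D\<rho>2 = {}" unfolding W_def D\<rho>_def D\<rho>2_def by auto
          have d2: "D\<rho> \<inter> D\<rho>2 = {}"
          proof (rule ccontr)
            assume "D\<rho> \<inter> D\<rho>2 \<noteq> {}"
            then obtain P where P: "P \<in> PD" "incident P \<rho>" "incident P \<rho>2" unfolding D\<rho>_def D\<rho>2_def by auto
            hence "P = Q" using rr PDs by auto
            thus False using P Ql0 by simp
          qed
          have "card (W \<union> D\<rho> \<union> D\<rho>2) = card W + c1 + c2"
            unfolding c1_def c2_def using d1 d2 by (simp add: card_Un_disjoint Int_Un_distrib2)
          moreover have "card (W \<union> D\<rho> \<union> D\<rho>2) \<le> x"
            unfolding x_def W_def D\<rho>_def D\<rho>2_def by (intro card_mono) auto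
          ultimately show ?thesis by simp
        qed
        ultimately show False using cU2 cP\<rho>2 qsc1 ts NLQ Ns sz' by linarith
      qed
    qed
  qed
qed

lemma dominating_swap: "dominating PD LD \<Longrightarrow> dominating LD PD"
  unfolding dominating_def pg_lines_eq using incident_sym by metis

lemma primal_swap: "primal q PD LD \<Longrightarrow> primal q LD PD"
  unfolding primal_def pg_lines_eq using incident_sym by metis

lemma blocking_covering: "blocking_set C \<Longrightarrow> covering_set C"
  unfolding blocking_set_def covering_set_def pg_lines_eq using incident_sym by metis

theorem proposition5:
  fixes PD LD :: "('a::{field,finite}) vec3 set set"
  fixes q :: nat
  defines "q \<equiv> card (UNIV :: 'a set)"
  assumes dom: "dominating PD LD"
    and nonprimal: "\<not> primal q PD LD"
  shows "(card PD + card LD + card PD \<le> 4*q - 3 \<longrightarrow> blocking_set PD) \<and>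
         (card PD + card LD + card LD \<le> 4*q - 3 \<longrightarrow> covering_set LD)"
proof (intro conjI impI)
  have np: "\<not> primal (card (UNIV :: 'a set)) PD LD" using nonprimal q_def by simp
  assume "card PD + card LD + card PD \<le> 4*q - 3"
  thus "blocking_set PD" using main_blocking[OF dom np] q_def by simp
next
  have np: "\<not> primal (card (UNIV :: 'a set)) LD PD" using nonprimal q_def primal_swap by metis
  assume "card PD + card LD + card LD \<le> 4*q - 3"
  hence "card LD + card PD + card LD \<le> 4 * card (UNIV :: 'a set) - 3" using q_def by simp
  hence "blocking_set LD" using main_blocking[OF dominating_swap[OF dom] np] by simp
  thus "covering_set LD" by (rule blocking_covering)
qed

end
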